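(* Let $U\in\mathbb R^{\hat D\times\hat D}$, let $D_{t+1},\dots,D_T$ be diagonal $\hat D\times\hat D$ matrices, let $\alpha\ge0$, $\beta>0$, and set $m=\max_k\|U^\top D_{k+1}\|_2$. Suppose $\frac{\alpha}{\beta}m<1$. Then the matrix $M(U)=\prod_{k=t}^{T-1}(\alpha U^\top D_{k+1}+\beta I)$ has condition number $$\kappa_{M(U)}\le\frac{\big(1+\frac{\alpha}{\beta}m\big)^{T-t}}{\big(1-\frac{\alpha}{\beta}m\big)^{T-t}}.$$ In particular, if $\beta=1-\alpha$ and $\alpha=\frac{1}{T m}$ (with $Tm>1$ large enough that $\frac{\alpha}{\beta}m<1$), then $\kappa_{M(U)}=O(1)$ uniformly in $T$.
   Context: The condition number of an invertible matrix $A$ is $\kappa_A=\|A\|_2\,\|A^{-1}\|_2$. This product appears in the FastRNN gradients, where $D_k=\mathrm{diag}(\sigma'(Wx_k+Uh_{k-1}))$. *)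

theory Defs
  imports "HOL-Analysis.Analysis"
begin

definition spec_norm :: "real^'n^'n \<Rightarrow> real" where
  "spec_norm A = onorm (\<lambda>x. A *v x)"

definition cond_num :: "real^'n^'n \<Rightarrow> real" where
  "cond_num A = spec_norm A * spec_norm (matrix_inv A)"

definition diag_matrix :: "real^'n^'n \<Rightarrow> bool" where
  "diag_matrix A \<longleftrightarrow> (\<forall>i j. i \<noteq> j \<longrightarrow> A $ i $ j = 0)"

text \<open>M(U) = prod_{k=t}^{T-1} (alpha U^T D_{k+1} + beta I), factors ordered
  left to right with increasing k.\<close>
definition Mmat :: "real \<Rightarrow> real \<Rightarrow> real^'n^'n \<Rightarrow> (nat \<Rightarrow> real^'n^'n) \<Rightarrow> nat \<Rightarrow> nat \<Rightarrow> real^'n^'n" where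
  "Mmat \<alpha> \<beta> U D t T =
     foldr (\<lambda>k acc. (\<alpha> *\<^sub>R (transpose U ** D (Suc k)) + \<beta> *\<^sub>R mat 1) ** acc) [t..<T] (mat 1)"

definition mval :: "real^'n^'n \<Rightarrow> (nat \<Rightarrow> real^'n^'n) \<Rightarrow> nat \<Rightarrow> nat \<Rightarrow> real" where
  "mval U D t T = Max ((\<lambda>k. spec_norm (transpose U ** D (Suc k))) ` {t..<T})"

end

theory Submission
  imports Defs
begin


lemma sn_bound: "norm (A *v x) \<le> spec_norm A * norm x"
  unfolding spec_norm_def by (rule onorm[OF matrix_vector_mul_bounded_linear])

lemma sn_nonneg: "0 \<le> spec_norm A"
  unfolding spec_norm_def by (rule onorm_pos_le[OF matrix_vector_mul_bounded_linear])

lemma fold_bounds: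
  fixes B :: "nat \<Rightarrow> real^'n^'n"
  assumes a: "0 \<le> \<alpha>" and am: "\<alpha> * m \<le> \<beta>"
    and hb: "\<forall>k\<in>set ks. spec_norm (B k) \<le> m"
  shows "(\<beta> - \<alpha>*m)^length ks * norm x \<le> norm (foldr (\<lambda>k acc. (\<alpha> *\<^sub>R B k + \<beta> *\<^sub>R mat 1) ** acc) ks (mat 1) *v x)
       \<and> norm (foldr (\<lambda>k acc. (\<alpha> *\<^sub>R B k + \<beta> *\<^sub>R mat 1) ** acc) ks (mat 1) *v x) \<le> (\<beta> + \<alpha>*m)^length ks * norm x"
  using hb
proof (induction ks)
  case Nil
  then show ?case by (simp add: matrix_vector_mul_lid)
next
  case (Cons k ks)
  define F where "F = foldr (\<lambda>k acc. (\<alpha> *\<^sub>R B k + \<beta> *\<^sub>R mat 1) ** acc) ks (mat 1)"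
  define y where "y = F *v x"
  have IH: "(\<beta> - \<alpha>*m)^length ks * norm x \<le> norm y" "norm y \<le> (\<beta> + \<alpha>*m)^length ks * norm x"
    using Cons by (auto simp: F_def y_def)
  have bk: "spec_norm (B k) \<le> m" using Cons.prems by simp
  have m0: "0 \<le> m" using bk sn_nonneg order_trans by blast
  have eq: "foldr (\<lambda>k acc. (\<alpha> *\<^sub>R B k + \<beta> *\<^sub>R mat 1) ** acc) (k#ks) (mat 1) *v x
      = \<alpha> *\<^sub>R (B k *v y) + \<beta> *\<^sub>R y"
    by (simp add: F_def y_def matrix_vector_mul_assoc[symmetric] matrix_vector_mult_add_rdistrib
        scaleR_matrix_vector_assoc[symmetric] matrix_vector_mul_lid)
  have nb: "norm (B k *v y) \<le> m * norm y"
    using sn_bound[of "B k" y] bk by (meson mult_right_mono norm_ge_zero order_trans)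
  have anb: "\<alpha> * norm (B k *v y) \<le> \<alpha> * m * norm y"
    using mult_left_mono[OF nb a] by simp
  have up: "norm (\<alpha> *\<^sub>R (B k *v y) + \<beta> *\<^sub>R y) \<le> (\<beta> + \<alpha>*m) * norm y"
  proof -
    have "norm (\<alpha> *\<^sub>R (B k *v y) + \<beta> *\<^sub>R y) \<le> \<alpha> * norm (B k *v y) + \<bar>\<beta>\<bar> * norm y"
      using norm_triangle_ineq[of "\<alpha> *\<^sub>R (B k *v y)" "\<beta> *\<^sub>R y"] a by simp
    moreover have "\<beta> \<ge> 0" using am a m0 by (smt (verit) mult_nonneg_nonneg)
    ultimately show ?thesis using anb by (simp add: algebra_simps)
  qed
  have lo: "(\<beta> - \<alpha>*m) * norm y \<le> norm (\<alpha> *\<^sub>R (B k *v y) + \<beta> *\<^sub>R y)"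
  proof -
    have "norm (\<beta> *\<^sub>R y) - norm (\<alpha> *\<^sub>R (B k *v y)) \<le> norm (\<alpha> *\<^sub>R (B k *v y) + \<beta> *\<^sub>R y)"
      by (metis add.commute norm_diff_ineq)
    moreover have "\<beta> \<ge> 0" using am a m0 by (smt (verit) mult_nonneg_nonneg)
    ultimately show ?thesis using anb a by (simp add: algebra_simps)
  qed
  have c1: "0 \<le> \<beta> - \<alpha>*m" using am by simp
  have c2: "0 \<le> \<beta> + \<alpha>*m" using am a m0 by (smt (verit) mult_nonneg_nonneg)
  have "(\<beta> - \<alpha>*m)^length (k#ks) * norm x = (\<beta> - \<alpha>*m) * ((\<beta> - \<alpha>*m)^length ks * norm x)" by simp
  also have "\<dots> \<le> (\<beta> - \<alpha>*m) * norm y" using IH(1) c1 by (rule mult_left_mono)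
  finally have L: "(\<beta> - \<alpha>*m)^length (k#ks) * norm x \<le> norm (\<alpha> *\<^sub>R (B k *v y) + \<beta> *\<^sub>R y)" using lo by linarith
  have "(\<beta> + \<alpha>*m) * norm y \<le> (\<beta> + \<alpha>*m) * ((\<beta> + \<alpha>*m)^length ks * norm x)" using IH(2) c2 by (rule mult_left_mono)
  also have "\<dots> = (\<beta> + \<alpha>*m)^length (k#ks) * norm x" by simp
  finally have U: "norm (\<alpha> *\<^sub>R (B k *v y) + \<beta> *\<^sub>R y) \<le> (\<beta> + \<alpha>*m)^length (k#ks) * norm x" using up by linarith
  show ?case using L U eq by simp
qed

lemma matrix_inv_right': "invertible A \<Longrightarrow> A ** matrix_inv A = mat 1"
  unfolding invertible_def matrix_inv_def by (rule someI_ex[where P="\<lambda>A'. A ** A' = mat 1 \<and> A' ** A = mat 1", THEN conjunct1])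

lemma exists_nonzero_vec: "\<exists>x::real^'n. x \<noteq> 0"
  by (rule exI[of _ "axis undefined 1"]) (simp add: axis_eq_0_iff)

lemma main1:
  fixes U :: "real^'n^'n"
  assumes a: "0 \<le> \<alpha>" and b: "0 < \<beta>" and r: "\<alpha> / \<beta> * mval U D t T < 1"
  shows "invertible (Mmat \<alpha> \<beta> U D t T) \<and>
      cond_num (Mmat \<alpha> \<beta> U D t T)
        \<le> (1 + \<alpha> / \<beta> * mval U D t T) ^ (T - t) / (1 - \<alpha> / \<beta> * mval U D t T) ^ (T - t)"
proof -
  define m where "m = mval U D t T"
  define M where "M = Mmat \<alpha> \<beta> U D t T"
  define n where "n = T - t"
  define L where "L = \<beta> - \<alpha> * m"
  define P where "P = \<beta> + \<alpha> * m"
  have am: "\<alpha> * m < \<beta>" using r b unfolding m_def by (simp add: field_simps)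
  have hb: "\<forall>k\<in>set [t..<T]. spec_norm (transpose U ** D (Suc k)) \<le> m"
    unfolding m_def mval_def by (auto intro!: Max_ge)
  have bnd: "\<And>x. L^n * norm x \<le> norm (M *v x) \<and> norm (M *v x) \<le> P^n * norm x"
    using fold_bounds[OF a less_imp_le[OF am] hb] unfolding M_def Mmat_def L_def P_def n_def by simp
  have L0: "0 < L" using am L_def by simp
  have Ln: "0 < L^n" using L0 by simp
  obtain x0 :: "real^'n" where x0: "x0 \<noteq> 0" using exists_nonzero_vec by blast
  have "L^n * norm x0 \<le> P^n * norm x0" using bnd[of x0] by linarith
  hence PL: "L^n \<le> P^n" using x0 by simp
  have inj: "inj ((*v) M)"
    unfolding vec.inj_iff_eq_0
  proof (intro allI impI)
    fix x assume "M *v x = 0"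
    hence "L^n * norm x \<le> 0" using bnd[of x] by simp
    hence "norm x \<le> 0" using Ln by (simp add: mult_le_0_iff)
    thus "x = 0" by simp
  qed
  have inv: "invertible M" using inj invertible_left_inverse matrix_left_invertible_injective by blast
  have s1: "spec_norm M \<le> P^n" unfolding spec_norm_def
    by (rule onorm_bound) (use PL Ln bnd in auto)
  have s2: "spec_norm (matrix_inv M) \<le> 1 / L^n" unfolding spec_norm_def
  proof (rule onorm_bound)
    show "0 \<le> 1 / L^n" using Ln by simp
    fix y
    have "M *v (matrix_inv M *v y) = y"
      by (simp add: matrix_vector_mul_assoc matrix_inv_right'[OF inv])
    hence "L^n * norm (matrix_inv M *v y) \<le> norm y" using bnd[of "matrix_inv M *v y"] by simp
    thus "norm (matrix_inv M *v y) \<le> 1 / L^n * norm y" using Ln by (simp add: field_simps)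
  qed
  have "cond_num M \<le> P^n * (1 / L^n)" unfolding cond_num_def
    using s1 s2 sn_nonneg Ln by (meson mult_mono order_trans sn_nonneg)
  also have "P^n * (1 / L^n) = (1 + \<alpha>/\<beta>*m)^n / (1 - \<alpha>/\<beta>*m)^n"
  proof -
    have "P = \<beta> * (1 + \<alpha>/\<beta>*m)" "L = \<beta> * (1 - \<alpha>/\<beta>*m)" using b unfolding P_def L_def by (simp_all add: field_simps)
    thus ?thesis using b by (simp add: power_mult_distrib)
  qed
  finally show ?thesis using inv unfolding M_def m_def n_def by simp
qed

lemma ratio_bound:
  fixes r :: real and T n :: nat
  assumes r0: "0 \<le> r" and rT: "r \<le> 2 / real T" and T3: "3 \<le> T" and nT: "n \<le> T"
  shows "(1 + r)^n / (1 - r)^n \<le> exp 12"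
proof -
  have T3': "3 \<le> real T" using T3 by simp
  have "2 / real T \<le> 2 / 3" by (rule divide_left_mono) (use T3' in auto)
  hence r23: "r \<le> 2/3" using rT by linarith
  have q: "(1 + r) / (1 - r) \<le> 1 + 12 / real T"
  proof -
    have f: "r*(6*r - 4) \<le> 0" by (rule mult_nonneg_nonpos) (use r0 r23 in auto)
    have "1 + r \<le> (1 + 6*r) * (1 - r)" using f by (simp add: algebra_simps)
    hence "(1 + r) / (1 - r) \<le> 1 + 6*r" using r23 by (simp add: divide_le_eq)
    also have "\<dots> \<le> 1 + 12 / real T" using rT by simp
    finally show ?thesis .
  qed
  have q0: "0 \<le> (1 + r) / (1 - r)" using r0 r23 by simp
  have "(1 + r)^n / (1 - r)^n = ((1 + r) / (1 - r))^n" by (simp add: power_divide)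
  also have "\<dots> \<le> (exp (12 / real T))^n"
  proof (rule power_mono)
    show "(1 + r) / (1 - r) \<le> exp (12 / real T)"
      by (rule order_trans[OF q exp_ge_add_one_self])
  qed (rule q0)
  also have "\<dots> \<le> (exp (12 / real T))^T" by (rule power_increasing[OF nT]) simp
  also have "\<dots> = exp (real T * (12 / real T))" by (rule exp_of_nat_mult[symmetric])
  also have "\<dots> = exp 12" using T3 by simp
  finally show ?thesis .
qed

lemma main2:
  fixes U :: "real^'n^'n"
  assumes tT: "t < T" and T3: "3 \<le> T" and h: "2 \<le> real T * mval U D t T"
  shows "(let \<alpha> = 1 / (real T * mval U D t T); \<beta> = 1 - \<alpha> in
         invertible (Mmat \<alpha> \<beta> U D t T) \<and> cond_num (Mmat \<alpha> \<beta> U D t T) \<le> exp 12)"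
proof -
  define m where "m = mval U D t T"
  define \<alpha> where "\<alpha> = 1 / (real T * m)"
  define \<beta> where "\<beta> = 1 - \<alpha>"
  have Tp: "0 < real T" using T3 by simp
  have "0 < real T * m" using h unfolding m_def by linarith
  hence mp: "0 < m" using Tp by (simp add: zero_less_mult_iff)
  have a0: "0 \<le> \<alpha>" using mp Tp by (simp add: \<alpha>_def)
  have ahalf: "\<alpha> \<le> 1/2" using h unfolding \<alpha>_def m_def by (simp add: field_simps)
  have b: "\<beta> \<ge> 1/2" using ahalf \<beta>_def by simp
  have am: "\<alpha> * m = 1 / real T" using mp Tp by (simp add: \<alpha>_def)
  define r where "r = \<alpha> / \<beta> * m"
  have r0: "0 \<le> r" using a0 b mp by (simp add: r_def)
  have "r = (1 / real T) / \<beta>" using am by (simp add: r_def)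
  also have "\<dots> \<le> (1 / real T) / (1/2)" using b Tp by (intro divide_left_mono) auto
  finally have rT: "r \<le> 2 / real T" by simp
  have T3': "3 \<le> real T" using T3 by simp
  have "2 / real T \<le> 2 / 3" by (rule divide_left_mono) (use T3' in auto)
  hence r1: "r < 1" using rT by linarith
  have bp: "0 < \<beta>" using b by simp
  note M1 = main1[OF a0 bp r1[unfolded r_def m_def]]
  have "(1 + r)^(T-t) / (1 - r)^(T-t) \<le> exp 12" by (rule ratio_bound[OF r0 rT T3]) simp
  with M1 have "invertible (Mmat \<alpha> \<beta> U D t T) \<and> cond_num (Mmat \<alpha> \<beta> U D t T) \<le> exp 12"
    unfolding r_def m_def by linarith
  thus ?thesis unfolding \<beta>_def \<alpha>_def m_def Let_def by simp
qed


theorem mainTheorem7: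
  "(\<forall>(U::real^'n^'n) (D::nat \<Rightarrow> real^'n^'n) (t::nat) (T::nat) (\<alpha>::real) (\<beta>::real).
      (\<forall>k\<in>{t<..T}. diag_matrix (D k)) \<longrightarrow> 0 \<le> \<alpha> \<longrightarrow> 0 < \<beta> \<longrightarrow>
      \<alpha> / \<beta> * mval U D t T < 1 \<longrightarrow>
      invertible (Mmat \<alpha> \<beta> U D t T) \<and>
      cond_num (Mmat \<alpha> \<beta> U D t T)
        \<le> (1 + \<alpha> / \<beta> * mval U D t T) ^ (T - t) / (1 - \<alpha> / \<beta> * mval U D t T) ^ (T - t))
   \<and>
   (\<exists>C::real. \<forall>(U::real^'n^'n) (D::nat \<Rightarrow> real^'n^'n) (t::nat) (T::nat).
      (\<forall>k\<in>{t<..T}. diag_matrix (D k)) \<longrightarrow> t < T \<longrightarrow> 3 \<le> T \<longrightarrow>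
      2 \<le> real T * mval U D t T \<longrightarrow>
      (let \<alpha> = 1 / (real T * mval U D t T); \<beta> = 1 - \<alpha> in
         invertible (Mmat \<alpha> \<beta> U D t T) \<and> cond_num (Mmat \<alpha> \<beta> U D t T) \<le> C))"
  proof (intro conjI allI impI)
  fix U :: "real^'n^'n" and D t T and \<alpha> \<beta> :: real
  assume "0 \<le> \<alpha>" "0 < \<beta>" "\<alpha> / \<beta> * mval U D t T < 1"
  thus "invertible (Mmat \<alpha> \<beta> U D t T)" using main1 by blast
next
  fix U :: "real^'n^'n" and D t T and \<alpha> \<beta> :: real
  assume "0 \<le> \<alpha>" "0 < \<beta>" "\<alpha> / \<beta> * mval U D t T < 1"
  thus "cond_num (Mmat \<alpha> \<beta> U D t T)
        \<le> (1 + \<alpha> / \<beta> * mval U D t T) ^ (T - t) / (1 - \<alpha> / \<beta> * mval U D t T) ^ (T - t)" using main1 by blast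
next
  show "\<exists>C::real. \<forall>(U::real^'n^'n) (D::nat \<Rightarrow> real^'n^'n) (t::nat) (T::nat).
      (\<forall>k\<in>{t<..T}. diag_matrix (D k)) \<longrightarrow> t < T \<longrightarrow> 3 \<le> T \<longrightarrow>
      2 \<le> real T * mval U D t T \<longrightarrow>
      (let \<alpha> = 1 / (real T * mval U D t T); \<beta> = 1 - \<alpha> in
         invertible (Mmat \<alpha> \<beta> U D t T) \<and> cond_num (Mmat \<alpha> \<beta> U D t T) \<le> C)"
    by (rule exI[of _ "exp 12"]) (blast intro: main2)
qed

end
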